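(* Let $\mathcal Y$ be a finite set, $\mathcal W\subseteq\mathbb{R}^D$ a convex set, $f_i:\mathcal Y\times\mathbb{R}^D\to\mathbb{R}$ ($i=1,\dots,n$) functions convex and differentiable in $w$ with Lipschitz continuous gradients, and $r:\mathbb{R}^D\to\mathbb{R}$ strongly convex and differentiable with Lipschitz continuous gradient, such that each $g_i(w):=r(w)+\max_{y\in\mathcal Y}f_i(y,w)$ is $\mu$-strongly convex on $\mathcal W$. Suppose there exists $w_0\in\mathcal W$ with $g_i(w_0)=0$ for all $i$, and let $$\Delta=\max_{w,i,j,y}\big|\partial_j[r(w)+f_i(y,w)]\big|,$$ where the maximum ranges over all indices $i$, all $y\in\mathcal Y$, all $w\in\mathcal W$ and all coordinates $j$ of $w$. Then: (a) for any $w_1,w_2\in\mathcal W$, $\|w_1-w_2\|\le\frac{2\sqrt D\,\Delta}{\mu}$; (b) for any index $i$ and any $w\in\mathcal W$, $|g_i(w)|\le\frac{2D\Delta^2}{\mu}$.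
   Context: $\partial_j$ denotes the partial derivative with respect to the $j$-th coordinate of $w$. *)

theory Defs
  imports "HOL-Analysis.Analysis"
begin

definition partial_deriv :: "'D::finite \<Rightarrow> (real^'D \<Rightarrow> real) \<Rightarrow> real^'D \<Rightarrow> real" where
  "partial_deriv j h w = frechet_derivative h (at w) (axis j 1)"

definition grad :: "(real^'D::finite \<Rightarrow> real) \<Rightarrow> real^'D \<Rightarrow> real^'D" where
  "grad h w = (\<chi> j. partial_deriv j h w)"

definition strongly_convex_on :: "real \<Rightarrow> 'a::real_normed_vector set \<Rightarrow> ('a \<Rightarrow> real) \<Rightarrow> bool" where
  "strongly_convex_on mu S h \<longleftrightarrow>
     (\<forall>x\<in>S. \<forall>y\<in>S. \<forall>t::real. 0 \<le> t \<and> t \<le> 1 \<longrightarrow>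
        h (t *\<^sub>R x + (1 - t) *\<^sub>R y) \<le> t * h x + (1 - t) * h y - mu / 2 * t * (1 - t) * (norm (x - y))\<^sup>2)"

end

theory Submission
  imports Defs
begin



lemma grad_norm:
  fixes h :: "real^'D::finite \<Rightarrow> real"
  assumes "\<And>j. \<bar>partial_deriv j h w\<bar> \<le> B"
  shows "norm (grad h w) \<le> sqrt (real CARD('D)) * B"
proof -
  have B0: "0 \<le> B" using assms[of undefined] by linarith
  have "(norm (grad h w))\<^sup>2 = (\<Sum>j\<in>UNIV. (partial_deriv j h w)\<^sup>2)"
    unfolding norm_vec_def L2_set_def grad_def by (simp add: sum_nonneg)
  also have "\<dots> \<le> (\<Sum>j\<in>(UNIV::'D set). B\<^sup>2)"
    apply (rule sum_mono) using assms by (metis abs_ge_zero power2_abs power_mono)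
  also have "\<dots> = (sqrt (real CARD('D)) * B)\<^sup>2"
    by (simp add: power_mult_distrib)
  finally have c: "(norm (grad h w))\<^sup>2 \<le> (sqrt (real CARD('D)) * B)\<^sup>2" .
  show ?thesis using power2_le_imp_le[OF c] B0 by simp
qed

lemma deriv_repr:
  fixes h :: "real^'D::finite \<Rightarrow> real"
  assumes "h differentiable (at w)"
  shows "frechet_derivative h (at w) v = inner (grad h w) v"
proof -
  have lin: "linear (frechet_derivative h (at w))" using linear_frechet_derivative[OF assms] .
  have "frechet_derivative h (at w) v = frechet_derivative h (at w) (\<Sum>i\<in>UNIV. v$i *s axis i 1)"
    by (simp add: basis_expansion)
  also have "\<dots> = (\<Sum>i\<in>UNIV. v$i * frechet_derivative h (at w) (axis i 1))"
    using lin by (simp add: linear_sum linear_cmul scalar_mult_eq_scaleR)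
  also have "\<dots> = inner (grad h w) v"
    by (simp add: inner_vec_def grad_def partial_deriv_def mult.commute)
  finally show ?thesis .
qed

lemma lip_h:
  fixes h :: "real^'D::finite \<Rightarrow> real"
  assumes d: "\<And>w. h differentiable (at w)" and cW: "convex W"
    and b: "\<And>j w. w \<in> W \<Longrightarrow> \<bar>partial_deriv j h w\<bar> \<le> B" and x: "x \<in> W" and z: "z \<in> W"
  shows "\<bar>h x - h z\<bar> \<le> sqrt (real CARD('D)) * B * norm (x - z)"
proof -
  have "norm (h x - h z) \<le> sqrt (real CARD('D)) * B * norm (x - z)"
  proof (rule differentiable_bound[OF cW _ _ x z])
    fix w assume "w \<in> W"
    show "(h has_derivative frechet_derivative h (at w)) (at w within W)"
      using d frechet_derivative_works has_derivative_at_withinI by blast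
    show "onorm (frechet_derivative h (at w)) \<le> sqrt (real CARD('D)) * B"
    proof (rule onorm_le)
      fix v
      have "norm (frechet_derivative h (at w) v) = \<bar>inner (grad h w) v\<bar>"
        using deriv_repr[OF d] by simp
      also have "\<dots> \<le> norm (grad h w) * norm v" by (rule Cauchy_Schwarz_ineq2)
      also have "\<dots> \<le> sqrt (real CARD('D)) * B * norm v"
        using grad_norm[of h w B] b[OF \<open>w \<in> W\<close>] by (simp add: mult_right_mono)
      finally show "norm (frechet_derivative h (at w) v) \<le> sqrt (real CARD('D)) * B * norm v" .
    qed
  qed
  then show ?thesis by simp
qed

lemma lim_lemma:
  fixes a b :: real
  assumes "\<And>t. 0 < t \<Longrightarrow> t < 1 \<Longrightarrow> a * (1 - t) \<le> b"
  shows "a \<le> b"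
proof (rule tendsto_upperbound)
  show "((\<lambda>t. a * (1 - t)) \<longlongrightarrow> a) (at_right (0::real))"
    by (auto intro!: tendsto_eq_intros)
  show "\<forall>\<^sub>F t in at_right (0::real). a * (1 - t) \<le> b"
    unfolding eventually_at_right_field using assms by (intro exI[of _ 1]) auto
  show "at_right (0::real) \<noteq> bot" by simp
qed

lemma diam_lemma:
  fixes G mu :: real and W :: "'a::real_normed_vector set" and h :: "'a \<Rightarrow> real"
  assumes cW: "convex W" and sc: "strongly_convex_on mu W h"
    and lip: "\<And>x z. x \<in> W \<Longrightarrow> z \<in> W \<Longrightarrow> h x \<le> h z + G * norm (x - z)"
    and x: "x \<in> W" and z: "z \<in> W" and mu: "mu > 0" and G: "G \<ge> 0"
  shows "norm (x - z) \<le> 2 * G / mu"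
proof -
  have key: "mu/2*(1-t)*(norm(x-z))\<^sup>2 \<le> h x - h z + G*norm(x-z)"
    if x: "x \<in> W" and z: "z \<in> W" and t: "0 < t" "t < 1" for x z t
  proof -
    define d where "d = norm (x - z)"
    define p where "p = t *\<^sub>R x + (1 - t) *\<^sub>R z"
    have pW: "p \<in> W" unfolding p_def using cW x z t convexD[of W x z t "1-t"] by auto
    have s: "h p \<le> t * h x + (1 - t) * h z - mu / 2 * t * (1 - t) * d\<^sup>2"
      using sc x z t unfolding strongly_convex_on_def p_def d_def by auto
    have "z - p = t *\<^sub>R (z - x)" unfolding p_def by (simp add: algebra_simps)
    then have "norm (z - p) = t * d" using t unfolding d_def by (simp add: norm_minus_commute)
    then have l: "h z \<le> h p + G * (t * d)" using lip[OF z pW] by simp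
    have "t * (mu/2*(1-t)*d\<^sup>2) \<le> t * (h x - h z + G*d)"
      using s l by (simp add: algebra_simps)
    then have "mu/2*(1-t)*d\<^sup>2 \<le> h x - h z + G*d" using t by simp
    then show ?thesis unfolding d_def .
  qed
  define d where "d = norm (x - z)"
  have "mu * d\<^sup>2 * (1 - t) \<le> 2 * G * d" if "0 < t" "t < 1" for t
  proof -
    have a: "mu/2*(1-t)*d\<^sup>2 \<le> h x - h z + G*d" using key[OF x z that] unfolding d_def .
    have b: "mu/2*(1-t)*d\<^sup>2 \<le> h z - h x + G*d" using key[OF z x that] unfolding d_def
      by (simp add: norm_minus_commute)
    have "mu * d\<^sup>2 * (1 - t) = 2 * (mu/2*(1-t)*d\<^sup>2)" by simp
    then show ?thesis using a b by linarith
  qed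
  then have m: "mu * d\<^sup>2 \<le> 2 * G * d" by (rule lim_lemma)
  show ?thesis
  proof (cases "d = 0")
    case True then show ?thesis using G mu unfolding d_def by simp
  next
    case False
    then have "d > 0" unfolding d_def by simp
    then have "mu * d \<le> 2 * G" using m by (simp add: power2_eq_square)
    then show ?thesis using mu unfolding d_def by (simp add: pos_le_divide_eq mult.commute)
  qed
qed

theorem mainTheorem3:
  fixes Y :: "'y set" and W :: "(real^'D::finite) set"
    and f :: "nat \<Rightarrow> 'y \<Rightarrow> real^'D \<Rightarrow> real" and r :: "real^'D \<Rightarrow> real"
    and n :: nat and mu Delta :: real and w0 :: "real^'D"
  defines "g \<equiv> (\<lambda>i w. r w + Max ((\<lambda>y. f i y w) ` Y))"
  assumes Y_fin: "finite Y" and Y_ne: "Y \<noteq> {}"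
    and W_conv: "convex W"
    and f_convex: "\<And>i y. i \<in> {1..n} \<Longrightarrow> y \<in> Y \<Longrightarrow> convex_on UNIV (f i y)"
    and f_diff: "\<And>i y w. i \<in> {1..n} \<Longrightarrow> y \<in> Y \<Longrightarrow> f i y differentiable (at w)"
    and f_lip: "\<And>i y. i \<in> {1..n} \<Longrightarrow> y \<in> Y \<Longrightarrow> \<exists>L. L-lipschitz_on UNIV (grad (f i y))"
    and r_sc: "\<exists>c>0. strongly_convex_on c UNIV r"
    and r_diff: "\<And>w. r differentiable (at w)"
    and r_lip: "\<exists>L. L-lipschitz_on UNIV (grad r)"
    and mu_pos: "mu > 0"
    and g_sc: "\<And>i. i \<in> {1..n} \<Longrightarrow> strongly_convex_on mu W (g i)"
    and w0: "w0 \<in> W" "\<And>i. i \<in> {1..n} \<Longrightarrow> g i w0 = 0"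
    and Delta_mem: "Delta \<in> {\<bar>partial_deriv j (\<lambda>v. r v + f i y v) w\<bar> | i j y w.
                       i \<in> {1..n} \<and> y \<in> Y \<and> w \<in> W}"
    and Delta_max: "\<And>i j y w. i \<in> {1..n} \<Longrightarrow> y \<in> Y \<Longrightarrow> w \<in> W \<Longrightarrow>
                       \<bar>partial_deriv j (\<lambda>v. r v + f i y v) w\<bar> \<le> Delta"
  shows "(\<forall>w1\<in>W. \<forall>w2\<in>W. norm (w1 - w2) \<le> 2 * sqrt (real CARD('D)) * Delta / mu)
       \<and> (\<forall>i\<in>{1..n}. \<forall>w\<in>W. \<bar>g i w\<bar> \<le> 2 * real CARD('D) * Delta\<^sup>2 / mu)"
proof -
  from Delta_mem obtain i0 where i0: "i0 \<in> {1..n}" by blast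
  have D0: "0 \<le> Delta" using Delta_mem by auto
  define G where "G = sqrt (real CARD('D)) * Delta"
  have G0: "G \<ge> 0" unfolding G_def using D0 by simp
  have hlip: "\<bar>(r x + f i y x) - (r z + f i y z)\<bar> \<le> G * norm (x - z)"
    if "i \<in> {1..n}" "y \<in> Y" "x \<in> W" "z \<in> W" for i y x z
  proof -
    have "\<bar>(\<lambda>v. r v + f i y v) x - (\<lambda>v. r v + f i y v) z\<bar> \<le> G * norm (x - z)"
      unfolding G_def
    proof (rule lip_h[OF _ W_conv _ that(3,4)])
      show "(\<lambda>v. r v + f i y v) differentiable (at w)" for w
        using r_diff f_diff[OF that(1,2)] by (intro differentiable_add) auto
      show "\<bar>partial_deriv j (\<lambda>v. r v + f i y v) w\<bar> \<le> Delta" if "w \<in> W" for j w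
        using Delta_max \<open>i \<in> {1..n}\<close> \<open>y \<in> Y\<close> that by blast
    qed
    then show ?thesis by simp
  qed
  have glip: "g i x \<le> g i z + G * norm (x - z)"
    if i: "i \<in> {1..n}" and x: "x \<in> W" and z: "z \<in> W" for i x z
  proof -
    have fin: "finite ((\<lambda>y. f i y x) ` Y)" "(\<lambda>y. f i y x) ` Y \<noteq> {}"
      "finite ((\<lambda>y. f i y z) ` Y)" "(\<lambda>y. f i y z) ` Y \<noteq> {}" using Y_fin Y_ne by auto
    obtain y0 where y0: "y0 \<in> Y" "Max ((\<lambda>y. f i y x) ` Y) = f i y0 x"
      using Max_in[OF fin(1,2)] by auto
    have "f i y0 z \<le> Max ((\<lambda>y. f i y z) ` Y)" using fin(3) y0(1) by (intro Max_ge) auto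
    moreover have "r x + f i y0 x \<le> r z + f i y0 z + G * norm (x - z)"
      using hlip[OF i y0(1) x z] by linarith
    ultimately show ?thesis unfolding g_def using y0(2) by simp
  qed
  have diam: "norm (x - z) \<le> 2 * G / mu" if "x \<in> W" "z \<in> W" for x z
    by (rule diam_lemma[OF W_conv g_sc[OF i0] glip[OF i0] that mu_pos G0])
  show ?thesis
  proof
    show "\<forall>w1\<in>W. \<forall>w2\<in>W. norm (w1 - w2) \<le> 2 * sqrt (real CARD('D)) * Delta / mu"
      using diam unfolding G_def by (simp add: mult.assoc)
    show "\<forall>i\<in>{1..n}. \<forall>w\<in>W. \<bar>g i w\<bar> \<le> 2 * real CARD('D) * Delta\<^sup>2 / mu"
    proof (intro ballI)
      fix i w assume i: "i \<in> {1..n}" and w: "w \<in> W"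
      have "\<bar>g i w\<bar> \<le> G * norm (w - w0)"
        using glip[OF i w w0(1)] glip[OF i w0(1) w] w0(2)[OF i]
        by (simp add: norm_minus_commute)
      also have "\<dots> \<le> G * (2 * G / mu)"
        using diam[OF w w0(1)] G0 by (rule mult_left_mono)
      also have "\<dots> = 2 * real CARD('D) * Delta\<^sup>2 / mu"
        unfolding G_def by (simp add: power2_eq_square algebra_simps)
      finally show "\<bar>g i w\<bar> \<le> 2 * real CARD('D) * Delta\<^sup>2 / mu" .
    qed
  qed
qed

end
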